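(* For the undirected greedy routing network creation game: (i) on any finite point set in $\mathbb R^D$ ($D\ge1$) with the Euclidean metric, every pure Nash equilibrium $\mathbf s$ satisfies $c(\mathbf s)\le\left(2-\frac{1}{K(D)}\right)c(\mathbf s^* )$; (ii) on any finite point set of $n\ge2$ points in an arbitrary metric space, every pure Nash equilibrium $\mathbf s$ satisfies $c(\mathbf s)<2\,c(\mathbf s^* )$. Here $\mathbf s^*$ denotes a social optimum.
   Context: Undirected variant of the game: $\mathcal P$ is a finite set of points (agents) with metric $d$; each agent $u$ chooses a strategy $S_u\subseteq\{\{u,v\}:v\in\mathcal P\setminus\{u\}\}$ of undirected edges, which it owns; a profile $\mathbf s$ induces the network $G(\mathbf s)$ on $\mathcal P$ in which $\{u,v\}$ is an edge iff $\{u,v\}\in S_u\cup S_v$. A greedy routing path from $u$ to $w$ is a path $(x_1=u,\dots,x_j=w)$ in $G(\mathbf s)$ with $d(x_i,w)>d(x_{i+1},w)$ for all $i$; $u$ is greedy connected if it has a greedy routing path to every other agent. The cost of $u$ is $c_u(\mathbf s)=|S_u|$ if $u$ is greedy connected and $\infty$ otherwise; social cost $c(\mathbf s)=\sum_u c_u(\mathbf s)$. A pure Nash equilibrium is a profile where no agent can strictly decrease its cost by a unilateral deviation; a social optimum minimizes social cost. $K(D)$ is the kissing number of $\mathbb R^D$: the maximum number of pairwise disjoint (interior-disjoint) unit balls in $\mathbb R^D$ that can simultaneously touch a fixed unit ball; equivalently, the maximum number of points on the unit sphere of $\mathbb R^D$ with pairwise angular distance at least $60^\circ$. *)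

theory Defs
  imports "HOL-Analysis.Analysis" "HOL-Library.Extended_Real"
begin

text \<open>Kissing number K(D) of R^D, where R^D is represented by a euclidean_space type
  'a with DIM('a) = D: the maximum number of points on the unit sphere with pairwise
  angular distance at least 60 degrees (pi/3).\<close>
definition kissing_number :: "'a::euclidean_space itself \<Rightarrow> nat" where
  "kissing_number _ = Max {card S | S :: 'a set. finite S \<and> S \<subseteq> sphere 0 1 \<and>
       (\<forall>u\<in>S. \<forall>v\<in>S. u \<noteq> v \<longrightarrow> arccos (inner u v) \<ge> pi / 3)}"

definition metric_on :: "'a set \<Rightarrow> ('a \<Rightarrow> 'a \<Rightarrow> real) \<Rightarrow> bool" where
  "metric_on P d \<longleftrightarrow>
     (\<forall>x\<in>P. \<forall>y\<in>P. d x y \<ge> 0 \<and> (d x y = 0 \<longleftrightarrow> x = y) \<and> d x y = d y x) \<and>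
     (\<forall>x\<in>P. \<forall>y\<in>P. \<forall>z\<in>P. d x z \<le> d x y + d y z)"

text \<open>Strategy profiles: s u is the set of undirected edges (2-element sets) owned by u.\<close>
definition valid_strategy :: "'a set \<Rightarrow> 'a \<Rightarrow> 'a set set \<Rightarrow> bool" where
  "valid_strategy P u S \<longleftrightarrow> S \<subseteq> {{u, v} | v. v \<in> P \<and> v \<noteq> u}"

definition valid_profile :: "'a set \<Rightarrow> ('a \<Rightarrow> 'a set set) \<Rightarrow> bool" where
  "valid_profile P s \<longleftrightarrow> (\<forall>u\<in>P. valid_strategy P u (s u))"

definition is_edge :: "'a set \<Rightarrow> ('a \<Rightarrow> 'a set set) \<Rightarrow> 'a \<Rightarrow> 'a \<Rightarrow> bool" where
  "is_edge P s a b \<longleftrightarrow> a \<in> P \<and> b \<in> P \<and> {a, b} \<in> s a \<union> s b"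

definition greedy_path :: "'a set \<Rightarrow> ('a \<Rightarrow> 'a \<Rightarrow> real) \<Rightarrow> ('a \<Rightarrow> 'a set set)
    \<Rightarrow> 'a \<Rightarrow> 'a \<Rightarrow> 'a list \<Rightarrow> bool" where
  "greedy_path P d s u w xs \<longleftrightarrow> xs \<noteq> [] \<and> hd xs = u \<and> last xs = w \<and> set xs \<subseteq> P \<and>
     (\<forall>i. i + 1 < length xs \<longrightarrow>
        is_edge P s (xs ! i) (xs ! (i + 1)) \<and> d (xs ! i) w > d (xs ! (i + 1)) w)"

definition greedy_connected :: "'a set \<Rightarrow> ('a \<Rightarrow> 'a \<Rightarrow> real) \<Rightarrow> ('a \<Rightarrow> 'a set set) \<Rightarrow> 'a \<Rightarrow> bool" where
  "greedy_connected P d s u \<longleftrightarrow> (\<forall>w\<in>P - {u}. \<exists>xs. greedy_path P d s u w xs)"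

definition agent_cost :: "'a set \<Rightarrow> ('a \<Rightarrow> 'a \<Rightarrow> real) \<Rightarrow> ('a \<Rightarrow> 'a set set) \<Rightarrow> 'a \<Rightarrow> ereal" where
  "agent_cost P d s u = (if greedy_connected P d s u then ereal (real (card (s u))) else \<infinity>)"

definition social_cost :: "'a set \<Rightarrow> ('a \<Rightarrow> 'a \<Rightarrow> real) \<Rightarrow> ('a \<Rightarrow> 'a set set) \<Rightarrow> ereal" where
  "social_cost P d s = (\<Sum>u\<in>P. agent_cost P d s u)"

definition nash_equilibrium :: "'a set \<Rightarrow> ('a \<Rightarrow> 'a \<Rightarrow> real) \<Rightarrow> ('a \<Rightarrow> 'a set set) \<Rightarrow> bool" where
  "nash_equilibrium P d s \<longleftrightarrow> valid_profile P s \<and>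
     (\<forall>u\<in>P. \<forall>S. valid_strategy P u S \<longrightarrow> agent_cost P d s u \<le> agent_cost P d (s(u := S)) u)"

definition social_optimum :: "'a set \<Rightarrow> ('a \<Rightarrow> 'a \<Rightarrow> real) \<Rightarrow> ('a \<Rightarrow> 'a set set) \<Rightarrow> bool" where
  "social_optimum P d s \<longleftrightarrow> valid_profile P s \<and>
     (\<forall>s'. valid_profile P s' \<longrightarrow> social_cost P d s \<le> social_cost P d s')"

end

theory Submission
  imports Defs
begin

definition Nin :: "'a set \<Rightarrow> ('a \<Rightarrow> 'a set set) \<Rightarrow> 'a \<Rightarrow> 'a set" where
  "Nin P s u = {x\<in>P. {u,x} \<in> s x}"

definition Nb :: "'a set \<Rightarrow> ('a \<Rightarrow> 'a set set) \<Rightarrow> 'a \<Rightarrow> 'a set" where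
  "Nb P s u = {x\<in>P. is_edge P s u x}"

definition is_cover :: "'a set \<Rightarrow> ('a \<Rightarrow> 'a \<Rightarrow> real) \<Rightarrow> 'a \<Rightarrow> 'a set \<Rightarrow> bool" where
  "is_cover P d u C \<longleftrightarrow> C \<subseteq> P - {u} \<and> (\<forall>w\<in>P-{u}. \<exists>v\<in>C. d v w < d u w)"

lemma is_edge_sym: "is_edge P s a b = is_edge P s b a"
  unfolding is_edge_def by (auto simp: insert_commute)

lemma metric_pos: "metric_on P d \<Longrightarrow> u \<in> P \<Longrightarrow> w \<in> P \<Longrightarrow> u \<noteq> w \<Longrightarrow> d w w < d u w"
  unfolding metric_on_def by (metis order_le_less)

lemma greedy_path_single: "w \<in> P \<Longrightarrow> greedy_path P d s w w [w]"
  unfolding greedy_path_def by auto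

lemma greedy_path_mono:
  assumes "greedy_path P d s v w ys" "x \<in> set ys"
  shows "d x w \<le> d v w"
proof -
  have A: "\<forall>i. i + 1 < length ys \<longrightarrow> d (ys ! (i+1)) w < d (ys ! i) w"
    using assms(1) unfolding greedy_path_def by blast
  have B: "i < length ys \<Longrightarrow> d (ys ! i) w \<le> d (ys ! 0) w" for i
  proof (induction i)
    case 0 then show ?case by simp
  next
    case (Suc i) then show ?case using A[rule_format, of i] by fastforce
  qed
  have "ys \<noteq> []" "hd ys = v" using assms(1) unfolding greedy_path_def by auto
  then have "ys ! 0 = v" by (simp add: hd_conv_nth)
  with B assms(2) show ?thesis by (metis in_set_conv_nth)
qed

lemma greedy_path_cons:
  assumes gp: "greedy_path P d s v w ys" and u: "u \<in> P" and e: "is_edge P s' u v"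
    and lt: "d v w < d u w"
    and same: "\<And>x y. x \<in> set ys \<Longrightarrow> y \<in> set ys \<Longrightarrow> is_edge P s x y \<Longrightarrow> is_edge P s' x y"
  shows "greedy_path P d s' u w (u # ys)"
proof -
  have ne: "ys \<noteq> []" "hd ys = v" "last ys = w" "set ys \<subseteq> P"
    using gp unfolding greedy_path_def by auto
  have v0: "ys ! 0 = v" using ne by (simp add: hd_conv_nth)
  have st: "\<forall>i. i + 1 < length ys \<longrightarrow> is_edge P s (ys ! i) (ys ! (i + 1)) \<and> d (ys ! i) w > d (ys ! (i + 1)) w"
    using gp unfolding greedy_path_def by blast
  have "is_edge P s' ((u # ys) ! i) ((u # ys) ! (i + 1)) \<and> d ((u # ys) ! i) w > d ((u # ys) ! (i + 1)) w"
    if i: "i + 1 < length (u # ys)" for i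
  proof (cases i)
    case 0 then show ?thesis using e lt v0 by simp
  next
    case (Suc j)
    then have j: "j + 1 < length ys" using i by simp
    then have "ys ! j \<in> set ys" "ys ! (j+1) \<in> set ys" by auto
    then show ?thesis using st j same Suc by simp
  qed
  then show ?thesis unfolding greedy_path_def using ne u by auto
qed

definition full_strat :: "'a set \<Rightarrow> 'a \<Rightarrow> 'a set set" where
  "full_strat P u = {{u, v} | v. v \<in> P \<and> v \<noteq> u}"

lemma full_strat_valid: "valid_strategy P u (full_strat P u)"
  unfolding valid_strategy_def full_strat_def by (rule order_refl)

lemma full_strat_gc:
  assumes "metric_on P d" "u \<in> P" "s u = full_strat P u"
  shows "greedy_connected P d s u"
  unfolding greedy_connected_def
proof
  fix w assume w: "w \<in> P - {u}"
  have "greedy_path P d s u w [u, w]"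
    unfolding greedy_path_def is_edge_def using assms w metric_pos[OF assms(1), of u w]
    by (auto simp: full_strat_def nth_Cons split: nat.splits)
  then show "\<exists>xs. greedy_path P d s u w xs" by blast
qed

lemma agent_cost_finite_gc:
  "agent_cost P d s u \<noteq> \<infinity> \<Longrightarrow> greedy_connected P d s u"
  unfolding agent_cost_def by (auto split: if_splits)

lemma ne_gc:
  assumes fin: "finite P" and m: "metric_on P d" and ne: "nash_equilibrium P d s" and u: "u \<in> P"
  shows "greedy_connected P d s u"
proof -
  let ?s' = "s(u := full_strat P u)"
  have "greedy_connected P d ?s' u" using full_strat_gc[OF m u] by simp
  then have "agent_cost P d ?s' u \<noteq> \<infinity>" unfolding agent_cost_def by simp
  moreover have "agent_cost P d s u \<le> agent_cost P d ?s' u"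
    using ne u full_strat_valid[of P u] unfolding nash_equilibrium_def by (simp only: Ball_def)
  ultimately have "agent_cost P d s u \<noteq> \<infinity>" by auto
  then show ?thesis by (rule agent_cost_finite_gc)
qed

lemma gp_exists:
  assumes "\<forall>x\<in>P. greedy_connected P d s x" "v \<in> P" "w \<in> P"
  shows "\<exists>ys. greedy_path P d s v w ys"
proof (cases "v = w")
  case True then show ?thesis using greedy_path_single[OF assms(3)] by blast
next
  case False then have "w \<in> P - {v}" using assms(3) by blast
  then show ?thesis using assms(1,2) unfolding greedy_connected_def by blast
qed

lemma dev_bound:
  assumes fin: "finite P" and m: "metric_on P d" and ne: "nash_equilibrium P d s" and u: "u \<in> P"
    and cov: "is_cover P d u C"
  shows "card (s u) + card (C \<inter> Nin P s u) \<le> card C"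
proof -
  have allgc: "\<forall>x\<in>P. greedy_connected P d s x" using ne_gc[OF fin m ne] by blast
  define T where "T = (\<lambda>v. {u, v}) ` (C - Nin P s u)"
  let ?s' = "s(u := T)"
  have CP: "C \<subseteq> P - {u}" using cov unfolding is_cover_def by blast
  have finC: "finite C" using CP fin finite_subset by blast
  have Tv: "valid_strategy P u T" unfolding valid_strategy_def
  proof
    fix e assume "e \<in> T"
    then obtain v where "v \<in> C" "e = {u, v}" unfolding T_def by blast
    then show "e \<in> {{u, v} |v. v \<in> P \<and> v \<noteq> u}" using CP by blast
  qed
  have "greedy_connected P d ?s' u" unfolding greedy_connected_def
  proof
    fix w assume w: "w \<in> P - {u}"
    obtain v where v: "v \<in> C" "d v w < d u w" using cov w unfolding is_cover_def by blast
    have vP: "v \<in> P" "v \<noteq> u" using v CP by auto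
    obtain ys where ys: "greedy_path P d s v w ys" using gp_exists[OF allgc vP(1)] w by blast
    have e: "is_edge P ?s' u v"
    proof (cases "v \<in> Nin P s u")
      case True then have "{u,v} \<in> s v" unfolding Nin_def by blast
      moreover have "?s' v = s v" using vP by simp
      ultimately show ?thesis unfolding is_edge_def using u vP by simp
    next
      case False then have "{u,v} \<in> T" unfolding T_def using v by blast
      then show ?thesis unfolding is_edge_def using u vP by simp
    qed
    have nu: "x \<in> set ys \<Longrightarrow> x \<noteq> u" for x using greedy_path_mono[OF ys, of x] v by auto
    have same: "is_edge P ?s' x y" if "x \<in> set ys" "y \<in> set ys" "is_edge P s x y" for x y
    proof -
      have "x \<noteq> u" "y \<noteq> u" using nu that by auto
      then show ?thesis using that(3) unfolding is_edge_def by simp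
    qed
    have "greedy_path P d ?s' u w (u # ys)"
      by (rule greedy_path_cons[OF ys u e v(2) same])
    then show "\<exists>xs. greedy_path P d ?s' u w xs" by blast
  qed
  then have "agent_cost P d ?s' u = ereal (card T)" unfolding agent_cost_def by simp
  moreover have "agent_cost P d s u \<le> agent_cost P d ?s' u"
    using ne u Tv unfolding nash_equilibrium_def by (simp only: Ball_def)
  moreover have "agent_cost P d s u = ereal (card (s u))"
    using allgc u unfolding agent_cost_def by simp
  ultimately have "card (s u) \<le> card T" by simp
  also have "card T \<le> card (C - Nin P s u)" unfolding T_def by (rule card_image_le) (use finC in simp)
  also have "card (C - Nin P s u) = card C - card (C \<inter> Nin P s u)"
    using finC by (simp add: card_Diff_subset_Int)
  finally have "card (s u) \<le> card C - card (C \<inter> Nin P s u)" .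
  moreover have "card (C \<inter> Nin P s u) \<le> card C" using finC by (simp add: card_mono)
  ultimately show ?thesis by linarith
qed

lemma valid_no_loop: "valid_profile P s \<Longrightarrow> u \<in> P \<Longrightarrow> \<not> is_edge P s u u"
  unfolding valid_profile_def valid_strategy_def is_edge_def by auto

lemma gc_cover:
  assumes v: "valid_profile P s" and gc: "greedy_connected P d s u" and u: "u \<in> P"
  shows "is_cover P d u (Nb P s u)"
  unfolding is_cover_def
proof
  show "Nb P s u \<subseteq> P - {u}" unfolding Nb_def using valid_no_loop[OF v u] by auto
next
  show "\<forall>w\<in>P - {u}. \<exists>v\<in>Nb P s u. d v w < d u w"
  proof
    fix w assume w: "w \<in> P - {u}"
    obtain xs where xs: "greedy_path P d s u w xs" using gc w unfolding greedy_connected_def by blast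
    have ne: "xs \<noteq> []" "hd xs = u" "last xs = w" using xs unfolding greedy_path_def by auto
    have "length xs \<noteq> 1"
    proof
      assume "length xs = 1"
      then obtain a where "xs = [a]" by (metis One_nat_def length_0_conv length_Suc_conv)
      then show False using ne w by simp
    qed
    then have l: "0 + 1 < length xs" using ne by (cases xs) auto
    then have "is_edge P s (xs ! 0) (xs ! 1) \<and> d (xs ! 0) w > d (xs ! 1) w"
      using xs unfolding greedy_path_def by fastforce
    moreover have "xs ! 0 = u" using ne by (simp add: hd_conv_nth)
    ultimately show "\<exists>v\<in>Nb P s u. d v w < d u w" unfolding Nb_def is_edge_def by auto
  qed
qed

lemma forced_edge:
  assumes gc: "greedy_connected P d s x" and x: "x \<in> P" "x \<noteq> w" and w: "w \<in> P"
    and near: "\<forall>y\<in>P - {w}. d x w \<le> d y w"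
  shows "is_edge P s x w"
proof -
  obtain xs where xs: "greedy_path P d s x w xs" using gc x w unfolding greedy_connected_def by blast
  have ne: "xs \<noteq> []" "hd xs = x" "last xs = w" "set xs \<subseteq> P" using xs unfolding greedy_path_def by auto
  have "length xs \<noteq> 1"
  proof
    assume "length xs = 1"
    then obtain a where "xs = [a]" by (metis One_nat_def length_0_conv length_Suc_conv)
    then show False using ne x by simp
  qed
  then have l: "0 + 1 < length xs" using ne by (cases xs) auto
  then have st: "is_edge P s (xs ! 0) (xs ! 1) \<and> d (xs ! 0) w > d (xs ! 1) w"
    using xs unfolding greedy_path_def by fastforce
  have x0: "xs ! 0 = x" using ne by (simp add: hd_conv_nth)
  have "xs ! 1 \<in> P" using l ne(4) nth_mem by fastforce
  have "xs ! 1 = w"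
  proof (rule ccontr)
    assume "xs ! 1 \<noteq> w"
    then have "d x w \<le> d (xs ! 1) w" using near \<open>xs ! 1 \<in> P\<close> by blast
    with st x0 show False by simp
  qed
  then show ?thesis using st x0 by simp
qed

lemma full_valid_profile: "valid_profile P (full_strat P)"
  unfolding valid_profile_def by (simp add: full_strat_valid)

lemma opt_gc:
  assumes fin: "finite P" and m: "metric_on P d" and opt: "social_optimum P d sopt" and u: "u \<in> P"
  shows "greedy_connected P d sopt u"
proof -
  have "\<forall>x\<in>P. greedy_connected P d (full_strat P) x" using full_strat_gc[OF m] by blast
  then have "\<forall>x\<in>P. agent_cost P d (full_strat P) x \<noteq> \<infinity>" unfolding agent_cost_def by simp
  then have "social_cost P d (full_strat P) \<noteq> \<infinity>" unfolding social_cost_def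
    by (simp add: sum_Pinfty)
  moreover have "social_cost P d sopt \<le> social_cost P d (full_strat P)"
    using opt full_valid_profile unfolding social_optimum_def by blast
  ultimately have "social_cost P d sopt \<noteq> \<infinity>" by auto
  then have "agent_cost P d sopt u \<noteq> \<infinity>" using u fin unfolding social_cost_def
    by (auto simp: sum_Pinfty)
  then show ?thesis by (rule agent_cost_finite_gc)
qed

lemma card_filter_sum: "finite P \<Longrightarrow> card {x\<in>P. Q x} = (\<Sum>x\<in>P. if Q x then 1 else 0::nat)"
  by (simp add: sum.If_cases Int_def)

lemma finite_strat: "finite P \<Longrightarrow> valid_profile P s \<Longrightarrow> v \<in> P \<Longrightarrow> finite (s v)"
proof -
  assume a: "finite P" "valid_profile P s" "v \<in> P"
  have "s v \<subseteq> (\<lambda>x. {v, x}) ` P"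
  proof
    fix e assume "e \<in> s v"
    then have "e \<in> {{v, x} |x. x \<in> P \<and> x \<noteq> v}" using a(2,3) unfolding valid_profile_def valid_strategy_def by blast
    then obtain x where "x \<in> P" "e = {v, x}" by blast
    then show "e \<in> (\<lambda>x. {v, x}) ` P" by blast
  qed
  then show ?thesis using a(1) finite_subset by blast
qed

lemma card_pairs_le:
  assumes "finite P" "valid_profile P s" "v \<in> P"
  shows "card {x\<in>P. {v, x} \<in> s v} \<le> card (s v)"
proof (rule card_inj_on_le[where f = "\<lambda>x. {v, x}"])
  show "inj_on (\<lambda>x. {v, x}) {x \<in> P. {v, x} \<in> s v}"
    unfolding inj_on_def by (metis doubleton_eq_iff)
  show "(\<lambda>x. {v, x}) ` {x \<in> P. {v, x} \<in> s v} \<subseteq> s v" by blast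
  show "finite (s v)" by (rule finite_strat[OF assms])
qed

lemma deg_sum:
  assumes fin: "finite P" and v: "valid_profile P s"
  shows "(\<Sum>u\<in>P. card (Nb P s u)) \<le> 2 * (\<Sum>u\<in>P. card (s u))"
proof -
  have "card (Nb P s u) \<le> card {x\<in>P. {u, x} \<in> s u} + card {x\<in>P. {u, x} \<in> s x}" if "u \<in> P" for u
  proof -
    have "Nb P s u \<subseteq> {x\<in>P. {u, x} \<in> s u} \<union> {x\<in>P. {u, x} \<in> s x}"
      unfolding Nb_def is_edge_def by auto
    then have "card (Nb P s u) \<le> card ({x\<in>P. {u, x} \<in> s u} \<union> {x\<in>P. {u, x} \<in> s x})"
      by (rule card_mono[rotated]) (use fin in simp)
    also have "\<dots> \<le> card {x\<in>P. {u, x} \<in> s u} + card {x\<in>P. {u, x} \<in> s x}" by (rule card_Un_le)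
    finally show ?thesis .
  qed
  then have h1: "(\<Sum>u\<in>P. card (Nb P s u)) \<le> (\<Sum>u\<in>P. card {x\<in>P. {u, x} \<in> s u} + card {x\<in>P. {u, x} \<in> s x})"
    by (rule sum_mono)
  have h2: "(\<Sum>u\<in>P. card {x\<in>P. {u, x} \<in> s u} + card {x\<in>P. {u, x} \<in> s x}) = (\<Sum>u\<in>P. card {x\<in>P. {u, x} \<in> s u}) + (\<Sum>u\<in>P. card {x\<in>P. {u, x} \<in> s x})"
    by (rule sum.distrib)
  have h3: "(\<Sum>u\<in>P. card {x\<in>P. {u, x} \<in> s x}) = (\<Sum>x\<in>P. card {u\<in>P. {x, u} \<in> s x})"
  proof -
    have "(\<Sum>u\<in>P. card {x\<in>P. {u, x} \<in> s x}) = (\<Sum>u\<in>P. \<Sum>x\<in>P. if {u, x} \<in> s x then 1 else 0)"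
      using fin by (simp add: card_filter_sum)
    also have "\<dots> = (\<Sum>x\<in>P. \<Sum>u\<in>P. if {u, x} \<in> s x then 1 else 0)" by (rule sum.swap)
    also have "\<dots> = (\<Sum>x\<in>P. card {u\<in>P. {x, u} \<in> s x})"
      using fin by (simp add: card_filter_sum insert_commute)
    finally show ?thesis .
  qed
  have h4: "(\<Sum>u\<in>P. card {x\<in>P. {u, x} \<in> s u}) \<le> (\<Sum>u\<in>P. card (s u))"
    by (rule sum_mono) (rule card_pairs_le[OF fin v])
  have h5: "(\<Sum>x\<in>P. card {u\<in>P. {x, u} \<in> s x}) \<le> (\<Sum>u\<in>P. card (s u))"
    by (rule sum_mono) (rule card_pairs_le[OF fin v])
  show ?thesis using h1 h2 h3 h4 h5 by linarith
qed

definition Mnb :: "'a set \<Rightarrow> ('a \<Rightarrow> 'a) \<Rightarrow> 'a \<Rightarrow> 'a set" where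
  "Mnb P nn v = {x\<in>P - {v}. x = nn v \<or> nn x = v}"

definition is_nn :: "'a set \<Rightarrow> ('a \<Rightarrow> 'a \<Rightarrow> real) \<Rightarrow> ('a \<Rightarrow> 'a) \<Rightarrow> bool" where
  "is_nn P d nn \<longleftrightarrow> (\<forall>w\<in>P. nn w \<in> P \<and> nn w \<noteq> w \<and> (\<forall>y\<in>P - {w}. d (nn w) w \<le> d y w))"

lemma nn_exists:
  assumes fin: "finite P" and c: "2 \<le> card P"
  shows "\<exists>nn. is_nn P d nn"
proof -
  have "\<exists>x. x \<in> P \<and> x \<noteq> w \<and> (\<forall>y\<in>P - {w}. d x w \<le> d y w)" if w: "w \<in> P" for w
  proof -
    have "P - {w} \<noteq> {}"
    proof
      assume "P - {w} = {}" then have "P \<subseteq> {w}" by blast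
      then have "card P \<le> 1" using card_mono[of "{w}" P] by simp
      then show False using c by simp
    qed
    moreover have "finite (P - {w})" using fin by simp
    ultimately have ne: "(\<lambda>y. d y w) ` (P - {w}) \<noteq> {}" and fi: "finite ((\<lambda>y. d y w) ` (P - {w}))"
      by auto
    have "Min ((\<lambda>y. d y w) ` (P - {w})) \<in> (\<lambda>y. d y w) ` (P - {w})" by (rule Min_in[OF fi ne])
    then obtain x where x: "x \<in> P - {w}" "d x w = Min ((\<lambda>y. d y w) ` (P - {w}))" by (metis (no_types, lifting) imageE)
    have "\<forall>y\<in>P - {w}. d x w \<le> d y w"
    proof
      fix y assume "y \<in> P - {w}"
      then show "d x w \<le> d y w" unfolding x(2) using fi by (simp add: Min_le)
    qed
    then show ?thesis using x by blast
  qed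
  then have "\<forall>w\<in>P. \<exists>x. x \<in> P \<and> x \<noteq> w \<and> (\<forall>y\<in>P - {w}. d x w \<le> d y w)" by blast
  then obtain f where "\<forall>w\<in>P. f w \<in> P \<and> f w \<noteq> w \<and> (\<forall>y\<in>P - {w}. d (f w) w \<le> d y w)"
    by (rule bchoice[elim_format]) blast
  then show ?thesis unfolding is_nn_def by blast
qed

lemma nn_props: "is_nn P d nn \<Longrightarrow> w \<in> P \<Longrightarrow> nn w \<in> P \<and> nn w \<noteq> w \<and> (\<forall>y\<in>P - {w}. d (nn w) w \<le> d y w)"
  unfolding is_nn_def by blast

lemma nn_edge:
  assumes nn: "is_nn P d nn" and gc: "\<forall>x\<in>P. greedy_connected P d s x" and w: "w \<in> P"
  shows "is_edge P s (nn w) w"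
proof -
  have p: "nn w \<in> P" "nn w \<noteq> w" "\<forall>y\<in>P - {w}. d (nn w) w \<le> d y w" using nn_props[OF nn w] by auto
  have "greedy_connected P d s (nn w)" using gc p(1) by blast
  from forced_edge[OF this p(1) p(2) w p(3)] show ?thesis .
qed

lemma Mnb_sub_Nb:
  assumes nn: "is_nn P d nn" and gc: "\<forall>x\<in>P. greedy_connected P d s x" and v: "v \<in> P"
  shows "Mnb P nn v \<subseteq> Nb P s v"
proof
  fix x assume x: "x \<in> Mnb P nn v"
  then have xP: "x \<in> P" "x \<noteq> v" unfolding Mnb_def by auto
  show "x \<in> Nb P s v"
  proof (cases "x = nn v")
    case True
    then have "is_edge P s x v" using nn_edge[OF nn gc v] by simp
    then have "is_edge P s v x" using is_edge_sym by metis
    then show ?thesis unfolding Nb_def using xP by blast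
  next
    case False
    then have "nn x = v" using x unfolding Mnb_def by auto
    then have "is_edge P s v x" using nn_edge[OF nn gc xP(1)] by simp
    then show ?thesis unfolding Nb_def using xP by blast
  qed
qed

lemma count_credit:
  assumes fin: "finite P" and m: "metric_on P d" and ne: "nash_equilibrium P d s" and nn: "is_nn P d nn"
  shows "card P \<le> 2 * (\<Sum>v\<in>P. card (Mnb P nn v \<inter> Nin P s v))"
proof -
  have gc: "\<forall>x\<in>P. greedy_connected P d s x" using ne_gc[OF fin m ne] by blast
  define Sg where "Sg = (SIGMA v:P. Mnb P nn v \<inter> Nin P s v)"
  have finS: "finite Sg" unfolding Sg_def using fin by (auto simp: Mnb_def)
  have cS: "card Sg = (\<Sum>v\<in>P. card (Mnb P nn v \<inter> Nin P s v))"
    unfolding Sg_def using fin by (subst card_SigmaI) (auto simp: Mnb_def)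
  define f where "f w = (if {nn w, w} \<in> s w then (nn w, w) else (w, nn w))" for w
  have fS: "f ` P \<subseteq> Sg"
  proof
    fix y assume "y \<in> f ` P"
    then obtain w where w: "w \<in> P" "y = f w" by blast
    have nw: "nn w \<in> P" "nn w \<noteq> w" using nn_props[OF nn w(1)] by auto
    show "y \<in> Sg"
    proof (cases "{nn w, w} \<in> s w")
      case True
      then show ?thesis using w nw unfolding f_def Sg_def Mnb_def Nin_def by auto
    next
      case False
      have "is_edge P s (nn w) w" by (rule nn_edge[OF nn gc w(1)])
      then have "{nn w, w} \<in> s (nn w)" using False unfolding is_edge_def by blast
      then have "{w, nn w} \<in> s (nn w)" by (simp add: insert_commute)
      then show ?thesis using False w nw unfolding f_def Sg_def Mnb_def Nin_def by auto
    qed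
  qed
  have "P \<subseteq> (\<Union>y\<in>f ` P. {fst y, snd y})" unfolding f_def by force
  then have "card P \<le> card (\<Union>y\<in>f ` P. {fst y, snd y})"
    by (rule card_mono[rotated]) (use fin in simp)
  also have "\<dots> \<le> (\<Sum>y\<in>f ` P. card {fst y, snd y})" by (rule card_UN_le) (use fin in simp)
  also have "\<dots> \<le> (\<Sum>y\<in>f ` P. 2)" by (rule sum_mono) (simp add: card_insert_if)
  also have "\<dots> = 2 * card (f ` P)" by simp
  also have "\<dots> \<le> 2 * card Sg" using card_mono[OF finS fS] by simp
  finally show ?thesis using cS by simp
qed

lemma vertex_bound:
  assumes fin: "finite P" and m: "metric_on P d" and ne: "nash_equilibrium P d s" and u: "u \<in> P"
    and cov: "is_cover P d u C" and sub: "Mnb P nn u \<subseteq> C"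
  shows "card (s u) + card (Mnb P nn u \<inter> Nin P s u) \<le> card C"
proof -
  have finC: "finite C" using cov fin unfolding is_cover_def using finite_subset by blast
  have "card (Mnb P nn u \<inter> Nin P s u) \<le> card (C \<inter> Nin P s u)"
    using sub finC by (intro card_mono) auto
  then show ?thesis using dev_bound[OF fin m ne u cov] by linarith
qed

lemma cost_eq:
  assumes "\<forall>x\<in>P. greedy_connected P d s x"
  shows "social_cost P d s = ereal (real (\<Sum>u\<in>P. card (s u)))"
proof -
  have "social_cost P d s = (\<Sum>u\<in>P. ereal (real (card (s u))))"
    unfolding social_cost_def agent_cost_def using assms by (intro sum.cong) auto
  then show ?thesis by simp
qed

lemma opt_bound:
  assumes fin: "finite P" and m: "metric_on P d" and ne: "nash_equilibrium P d s"
    and opt: "social_optimum P d sopt" and nn: "is_nn P d nn" and u: "u \<in> P"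
  shows "card (s u) + card (Mnb P nn u \<inter> Nin P s u) \<le> card (Nb P sopt u)"
proof -
  have gco: "\<forall>x\<in>P. greedy_connected P d sopt x" using opt_gc[OF fin m opt] by blast
  have vp: "valid_profile P sopt" using opt unfolding social_optimum_def by blast
  show ?thesis
    by (rule vertex_bound[OF fin m ne u gc_cover[OF vp _ u] Mnb_sub_Nb[OF nn gco u]]) (use gco u in blast)
qed

lemma part2:
  assumes fin: "finite P" and c2: "2 \<le> card P" and m: "metric_on P d" and ne: "nash_equilibrium P d s"
    and opt: "social_optimum P d sopt"
  shows "social_cost P d s < 2 * social_cost P d sopt"
proof -
  have gcs: "\<forall>x\<in>P. greedy_connected P d s x" using ne_gc[OF fin m ne] by blast
  have gco: "\<forall>x\<in>P. greedy_connected P d sopt x" using opt_gc[OF fin m opt] by blast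
  have vp: "valid_profile P sopt" using opt unfolding social_optimum_def by blast
  obtain nn where nn: "is_nn P d nn" using nn_exists[OF fin c2] by blast
  have "(\<Sum>u\<in>P. card (s u) + card (Mnb P nn u \<inter> Nin P s u)) \<le> (\<Sum>u\<in>P. card (Nb P sopt u))"
    by (rule sum_mono) (rule opt_bound[OF fin m ne opt nn])
  then have h1: "(\<Sum>u\<in>P. card (s u)) + (\<Sum>u\<in>P. card (Mnb P nn u \<inter> Nin P s u)) \<le> (\<Sum>u\<in>P. card (Nb P sopt u))"
    by (simp add: sum.distrib)
  have h2: "(\<Sum>u\<in>P. card (Nb P sopt u)) \<le> 2 * (\<Sum>u\<in>P. card (sopt u))" by (rule deg_sum[OF fin vp])
  have h3: "card P \<le> 2 * (\<Sum>v\<in>P. card (Mnb P nn v \<inter> Nin P s v))" by (rule count_credit[OF fin m ne nn])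
  have "(\<Sum>u\<in>P. card (s u)) < 2 * (\<Sum>u\<in>P. card (sopt u))" using h1 h2 h3 c2 by linarith
  then have "real (\<Sum>u\<in>P. card (s u)) < 2 * real (\<Sum>u\<in>P. card (sopt u))" by linarith
  then show ?thesis unfolding cost_eq[OF gcs] cost_eq[OF gco] by simp
qed

lemma min_exists:
  fixes f :: "'b \<Rightarrow> real"
  assumes "finite U" "U \<noteq> {}"
  shows "\<exists>x\<in>U. \<forall>y\<in>U. f x \<le> f y"
proof -
  have fi: "finite (f ` U)" and ne: "f ` U \<noteq> {}" using assms by auto
  have "Min (f ` U) \<in> f ` U" by (rule Min_in[OF fi ne])
  then obtain x where x: "x \<in> U" "f x = Min (f ` U)" by (metis (no_types, lifting) imageE)
  have "\<forall>y\<in>U. f x \<le> f y"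
  proof
    fix y assume "y \<in> U"
    then show "f x \<le> f y" unfolding x(2) using fi by (simp add: Min_le)
  qed
  then show ?thesis using x by blast
qed

definition sepv :: "('a \<Rightarrow> 'a \<Rightarrow> real) \<Rightarrow> 'a \<Rightarrow> 'a set \<Rightarrow> bool" where
  "sepv d v C \<longleftrightarrow> (\<forall>x\<in>C. \<forall>y\<in>C. x \<noteq> y \<longrightarrow> d v x \<le> d x y \<and> d v y \<le> d x y)"

lemma metric_sym: "metric_on P d \<Longrightarrow> a \<in> P \<Longrightarrow> b \<in> P \<Longrightarrow> d a b = d b a"
  unfolding metric_on_def by blast

lemma greedy_sep:
  assumes m: "metric_on P d" and v: "v \<in> P"
  shows "finite U \<Longrightarrow> U \<subseteq> P - {v} \<Longrightarrow> \<exists>C\<subseteq>U. (\<forall>w\<in>U. \<exists>c\<in>C. d c w < d v w) \<and> sepv d v C"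
proof (induction "card U" arbitrary: U rule: less_induct)
  case less
  show ?case
  proof (cases "U = {}")
    case True then show ?thesis unfolding sepv_def by auto
  next
    case False
    obtain x where x: "x \<in> U" "\<forall>y\<in>U. d v x \<le> d v y" using min_exists[OF less.prems(1) False, of "d v"] by blast
    define U' where "U' = {w\<in>U. \<not> d x w < d v w}"
    have xP: "x \<in> P" "x \<noteq> v" using x less.prems by auto
    have "d x x < d v x" by (rule metric_pos[OF m v xP(1)]) (use xP in auto)
    then have xU': "x \<notin> U'" unfolding U'_def by auto
    have sub: "U' \<subseteq> U" unfolding U'_def by auto
    then have "U' \<subset> U" using x xU' by auto
    then have lt: "card U' < card U" using less.prems(1) by (simp add: psubset_card_mono)
    have finU': "finite U'" using sub less.prems(1) finite_subset by blast
    obtain C' where C': "C' \<subseteq> U'" "\<forall>w\<in>U'. \<exists>c\<in>C'. d c w < d v w" "sepv d v C'"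
      using less.hyps[OF lt finU'] sub less.prems(2) by blast
    have cov: "\<forall>w\<in>U. \<exists>c\<in>insert x C'. d c w < d v w"
    proof
      fix w assume w: "w \<in> U"
      show "\<exists>c\<in>insert x C'. d c w < d v w"
      proof (cases "d x w < d v w")
        case True then show ?thesis by blast
      next
        case False then have "w \<in> U'" unfolding U'_def using w by blast
        then show ?thesis using C'(2) by blast
      qed
    qed
    have sx: "d v x \<le> d x y \<and> d v y \<le> d x y" if y: "y \<in> C'" for y
    proof -
      have yU: "y \<in> U" "\<not> d x y < d v y" using y C'(1) unfolding U'_def by auto
      have "d v x \<le> d v y" using x(2) yU by blast
      then show ?thesis using yU by linarith
    qed
    have "sepv d v (insert x C')" unfolding sepv_def
    proof (intro ballI impI)
      fix a b assume a: "a \<in> insert x C'" and b: "b \<in> insert x C'" and ab: "a \<noteq> b"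
      have aP: "a \<in> P" "b \<in> P" using a b C'(1) sub less.prems(2) x by auto
      have sy: "d a b = d b a" by (rule metric_sym[OF m aP])
      show "d v a \<le> d a b \<and> d v b \<le> d a b"
      proof (cases "a = x")
        case True then show ?thesis using sx[of b] b ab by auto
      next
        case False
        note aF = False
        show ?thesis
        proof (cases "b = x")
          case True then show ?thesis using sx[of a] a aF sy by auto
        next
          case False then show ?thesis using C'(3) a b ab aF unfolding sepv_def by auto
        qed
      qed
    qed
    moreover have "insert x C' \<subseteq> U" using x C'(1) sub by auto
    ultimately show ?thesis using cov by blast
  qed
qed

lemma Mnb_sep1:
  assumes m: "metric_on P d" and nn: "is_nn P d nn" and v: "v \<in> P"
    and x: "x \<in> Mnb P nn v" and y: "y \<in> P" "y \<noteq> v" "y \<noteq> x"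
    and yc: "y \<in> Mnb P nn v \<or> d v y \<le> d x y"
  shows "d v x \<le> d x y"
proof -
  have xP: "x \<in> P" "x \<noteq> v" using x unfolding Mnb_def by auto
  show ?thesis
  proof (cases "x = nn v")
    case True
    have "d x v \<le> d y v" using nn_props[OF nn v] True y by auto
    then have 1: "d v x \<le> d v y" using metric_sym[OF m v xP(1)] metric_sym[OF m v y(1)] by simp
    have "d v y \<le> d x y"
    proof (cases "y \<in> Mnb P nn v")
      case True
      then have "nn y = v" using y \<open>x = nn v\<close> unfolding Mnb_def by auto
      then show ?thesis using nn_props[OF nn y(1)] xP y by auto
    next
      case False then show ?thesis using yc by blast
    qed
    then show ?thesis using 1 by linarith
  next
    case False
    then have "nn x = v" using x unfolding Mnb_def by auto
    then have "d v x \<le> d y x" using nn_props[OF nn xP(1)] y by auto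
    then show ?thesis using metric_sym[OF m xP(1) y(1)] by simp
  qed
qed

lemma K_cover:
  assumes fin: "finite P" and m: "metric_on P d" and nn: "is_nn P d nn" and v: "v \<in> P"
  shows "\<exists>C. is_cover P d v C \<and> Mnb P nn v \<subseteq> C \<and> sepv d v C"
proof -
  define B where "B = Mnb P nn v"
  define U where "U = {w\<in>P - {v}. \<forall>b\<in>B. \<not> d b w < d v w}"
  have BP: "B \<subseteq> P - {v}" unfolding B_def Mnb_def by auto
  obtain C' where C': "C' \<subseteq> U" "\<forall>w\<in>U. \<exists>c\<in>C'. d c w < d v w" "sepv d v C'"
    using greedy_sep[OF m v, of U] fin unfolding U_def by auto
  have UP: "U \<subseteq> P - {v}" unfolding U_def by auto
  have cov: "is_cover P d v (B \<union> C')" unfolding is_cover_def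
  proof
    show "B \<union> C' \<subseteq> P - {v}" using BP C'(1) UP by auto
    show "\<forall>w\<in>P - {v}. \<exists>c\<in>B \<union> C'. d c w < d v w"
    proof
      fix w assume w: "w \<in> P - {v}"
      show "\<exists>c\<in>B \<union> C'. d c w < d v w"
      proof (cases "\<exists>b\<in>B. d b w < d v w")
        case True then show ?thesis by blast
      next
        case False then have "w \<in> U" unfolding U_def using w by blast
        then show ?thesis using C'(2) by blast
      qed
    qed
  qed
  have one: "d v a \<le> d a b" if a: "a \<in> B \<union> C'" and b: "b \<in> B \<union> C'" and ab: "a \<noteq> b" for a b
  proof (cases "a \<in> B")
    case True
    have bP: "b \<in> P" "b \<noteq> v" using b BP C'(1) UP by auto
    have "b \<in> B \<or> d v b \<le> d a b"
    proof (cases "b \<in> B")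
      case False then have "b \<in> U" using b C'(1) by blast
      then show ?thesis using True unfolding U_def by auto
    qed simp
    then show ?thesis using Mnb_sep1[OF m nn v _ bP] True ab unfolding B_def by blast
  next
    case False
    then have aC: "a \<in> C'" using a by blast
    show ?thesis
    proof (cases "b \<in> B")
      case True
      have aP: "a \<in> P" "a \<noteq> v" using aC C'(1) UP by auto
      have "a \<in> U" using aC C'(1) by blast
      then have "\<not> d b a < d v a" using True unfolding U_def by auto
      moreover have "d b a = d a b" using metric_sym[OF m] aP BP True by auto
      ultimately show ?thesis by linarith
    next
      case False
      then have "b \<in> C'" using b by blast
      then show ?thesis using C'(3) aC ab unfolding sepv_def by blast
    qed
  qed
  have "sepv d v (B \<union> C')" unfolding sepv_def
  proof (intro ballI impI conjI)
    fix a b assume a: "a \<in> B \<union> C'" and b: "b \<in> B \<union> C'" and ab: "a \<noteq> b"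
    show "d v a \<le> d a b" by (rule one[OF a b ab])
    have "d v b \<le> d b a" by (rule one[OF b a]) (use ab in auto)
    moreover have "d b a = d a b" using metric_sym[OF m] a b BP C'(1) UP by blast
    ultimately show "d v b \<le> d a b" by simp
  qed
  then show ?thesis using cov unfolding B_def by blast
qed

lemma inner_half:
  fixes a b :: "'a::real_inner"
  assumes a: "a \<noteq> 0" and b: "b \<noteq> 0" and ha: "norm a \<le> norm (a - b)" and hb: "norm b \<le> norm (a - b)"
  shows "inner ((1 / norm a) *\<^sub>R a) ((1 / norm b) *\<^sub>R b) \<le> 1/2"
proof -
  have na: "norm a > 0" and nb: "norm b > 0" using a b by auto
  have i: "inner a b = ((norm a)\<^sup>2 + (norm b)\<^sup>2 - (norm (a - b))\<^sup>2) / 2" by (rule dot_norm_neg)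
  have i': "2 * inner a b = (norm a)\<^sup>2 + (norm b)\<^sup>2 - (norm (a - b))\<^sup>2" using i by simp
  have "(norm a)\<^sup>2 \<le> (norm (a - b))\<^sup>2" using ha by (simp add: power_mono)
  then have i2: "2 * inner a b \<le> (norm b)\<^sup>2" using i' by linarith
  have "(norm b)\<^sup>2 \<le> (norm (a - b))\<^sup>2" using hb by (simp add: power_mono)
  then have i1: "2 * inner a b \<le> (norm a)\<^sup>2" using i' by linarith
  have "2 * inner a b \<le> norm a * norm b"
  proof (cases "norm a \<le> norm b")
    case True
    then have "norm a * norm a \<le> norm a * norm b" using na by (simp add: mult_left_mono)
    then show ?thesis using i1 by (simp add: power2_eq_square)
  next
    case False
    then have "norm b * norm b \<le> norm a * norm b" using nb by (simp add: mult_right_mono)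
    then show ?thesis using i2 by (simp add: power2_eq_square)
  qed
  moreover have "inner ((1 / norm a) *\<^sub>R a) ((1 / norm b) *\<^sub>R b) = inner a b / (norm a * norm b)"
    by simp
  ultimately show ?thesis using na nb by (simp add: pos_divide_le_eq mult.commute)
qed

lemma unit_norm: "a \<noteq> 0 \<Longrightarrow> norm ((1 / norm a) *\<^sub>R a) = 1"
  by simp

lemma inner_unit_bounds:
  fixes u w :: "'a::real_inner"
  assumes "norm u = 1" "norm w = 1"
  shows "-1 \<le> inner u w \<and> inner u w \<le> 1"
  using Cauchy_Schwarz_ineq2[of u w] assms by (simp add: abs_le_iff)

lemma arccos_ge_imp:
  fixes u w :: "'a::real_inner"
  assumes "norm u = 1" "norm w = 1" "arccos (inner u w) \<ge> pi / 3"
  shows "inner u w \<le> 1/2"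
proof -
  have bd: "-1 \<le> inner u w" "inner u w \<le> 1" using inner_unit_bounds[OF assms(1,2)] by auto
  have "cos (arccos (inner u w)) \<le> cos (pi / 3)"
    by (rule cos_monotone_0_pi_le) (use assms(3) arccos_ubound[OF bd] in auto)
  then show ?thesis using bd by (simp add: cos_60)
qed

lemma half_imp_arccos:
  fixes u w :: "'a::real_inner"
  assumes "norm u = 1" "norm w = 1" "inner u w \<le> 1/2"
  shows "arccos (inner u w) \<ge> pi / 3"
proof -
  have bd: "-1 \<le> inner u w" "inner u w \<le> 1" using inner_unit_bounds[OF assms(1,2)] by auto
  have "arccos (1/2) \<le> arccos (inner u w)" by (rule arccos_le_arccos) (use bd assms(3) in auto)
  then show ?thesis by simp
qed

lemma floor_eq_close:
  fixes x y :: real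
  assumes "\<lfloor>x\<rfloor> = \<lfloor>y\<rfloor>"
  shows "\<bar>x - y\<bar> < 1"
proof -
  have "of_int \<lfloor>x\<rfloor> \<le> x" "x < of_int \<lfloor>x\<rfloor> + 1" by (rule of_int_floor_le, rule real_of_int_floor_add_one_gt)
  moreover have "of_int \<lfloor>y\<rfloor> \<le> y" "y < of_int \<lfloor>y\<rfloor> + 1" by (rule of_int_floor_le, rule real_of_int_floor_add_one_gt)
  ultimately show ?thesis using assms by (simp add: abs_less_iff) linarith
qed

lemma kiss_card_bound:
  fixes S :: "'a::euclidean_space set"
  assumes fin: "finite S" and sph: "S \<subseteq> sphere 0 1"
    and pw: "\<forall>u\<in>S. \<forall>v\<in>S. u \<noteq> v \<longrightarrow> arccos (inner u v) \<ge> pi / 3"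
  shows "card S \<le> card (Pi\<^sub>E (Basis::'a set) (\<lambda>_. {- 2 * int DIM('a) .. 2 * int DIM('a)}))"
proof -
  define N where "N = DIM('a)"
  have Npos: "N > 0" unfolding N_def by simp
  define g where "g u = restrict (\<lambda>i. \<lfloor>(2 * real N) * inner u i\<rfloor>) Basis" for u :: 'a
  have nrm: "norm u = 1" if "u \<in> S" for u using sph that by auto
  have gS: "g ` S \<subseteq> Pi\<^sub>E Basis (\<lambda>_. {- 2 * int N .. 2 * int N})"
  proof
    fix y assume "y \<in> g ` S"
    then obtain u where u: "u \<in> S" "y = g u" by blast
    have "\<lfloor>(2 * real N) * inner u i\<rfloor> \<in> {- 2 * int N .. 2 * int N}" if i: "i \<in> Basis" for i
    proof -
      have "\<bar>inner u i\<bar> \<le> 1" using Basis_le_norm[OF i, of u] nrm[OF u(1)] by simp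
      then have l1: "-1 \<le> inner u i" and l2: "inner u i \<le> 1" by (auto simp: abs_le_iff)
      have "(2 * real N) * (-1) \<le> (2 * real N) * inner u i" by (rule mult_left_mono[OF l1]) simp
      moreover have "(2 * real N) * inner u i \<le> (2 * real N) * 1" by (rule mult_left_mono[OF l2]) simp
      ultimately have "- (2 * real N) \<le> (2 * real N) * inner u i" "(2 * real N) * inner u i \<le> 2 * real N"
        by simp_all
      then show ?thesis by (auto simp: le_floor_iff floor_le_iff)
    qed
    then show "y \<in> Pi\<^sub>E Basis (\<lambda>_. {- 2 * int N .. 2 * int N})" unfolding u(2) g_def by auto
  qed
  have inj: "inj_on g S"
  proof (rule inj_onI, rule ccontr)
    fix u w assume u: "u \<in> S" and w: "w \<in> S" and eq: "g u = g w" and ne: "u \<noteq> w"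
    have close: "\<bar>inner (u - w) i\<bar> \<le> 1 / (2 * real N)" if i: "i \<in> Basis" for i
    proof -
      have "\<lfloor>(2 * real N) * inner u i\<rfloor> = \<lfloor>(2 * real N) * inner w i\<rfloor>"
        using fun_cong[OF eq, of i] i unfolding g_def by simp
      then have "\<bar>(2 * real N) * inner u i - (2 * real N) * inner w i\<bar> < 1"
        by (rule floor_eq_close)
      moreover have "(2 * real N) * inner u i - (2 * real N) * inner w i = (2 * real N) * inner (u - w) i"
        by (simp add: inner_diff_left right_diff_distrib)
      moreover have "\<bar>(2 * real N) * inner (u - w) i\<bar> = (2 * real N) * \<bar>inner (u - w) i\<bar>"
        by (simp add: abs_mult)
      ultimately have "(2 * real N) * \<bar>inner (u - w) i\<bar> < 1" by simp
      then show ?thesis using Npos by (simp add: pos_le_divide_eq mult.commute less_imp_le)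
    qed
    have "norm (u - w) \<le> (\<Sum>i\<in>Basis. \<bar>inner (u - w) i\<bar>)" by (rule norm_le_l1)
    also have "\<dots> \<le> (\<Sum>i\<in>(Basis::'a set). 1 / (2 * real N))" by (rule sum_mono) (rule close)
    also have "\<dots> = 1/2" using Npos unfolding N_def by simp
    finally have n1: "norm (u - w) \<le> 1/2" .
    have "inner u w \<le> 1/2" using arccos_ge_imp[OF nrm[OF u] nrm[OF w]] pw u w ne by blast
    moreover have "(norm (u - w))\<^sup>2 = (norm u)\<^sup>2 + (norm w)\<^sup>2 - 2 * inner u w"
      using dot_norm_neg[of u w] by simp
    ultimately have "(norm (u - w))\<^sup>2 \<ge> 1" using nrm[OF u] nrm[OF w] by simp
    moreover have "(norm (u - w))\<^sup>2 \<le> (1/2)\<^sup>2" by (rule power_mono[OF n1 norm_ge_zero])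
    moreover have "(1/2::real)\<^sup>2 = 1/4" by (simp add: power2_eq_square)
    ultimately show False by linarith
  qed
  have "card S = card (g ` S)" using card_image[OF inj] by simp
  also have "\<dots> \<le> card (Pi\<^sub>E (Basis::'a set) (\<lambda>_. {- 2 * int N .. 2 * int N}))"
  proof -
    have fP: "finite (Pi\<^sub>E (Basis::'a set) (\<lambda>_. {- 2 * int N .. 2 * int N}))" by (rule finite_PiE) auto
    show ?thesis by (rule card_mono[OF fP gS])
  qed
  finally show ?thesis unfolding N_def .
qed

lemma kiss_ge:
  fixes S :: "'a::euclidean_space set"
  assumes fin: "finite S" and sph: "S \<subseteq> sphere 0 1"
    and pw: "\<forall>u\<in>S. \<forall>v\<in>S. u \<noteq> v \<longrightarrow> arccos (inner u v) \<ge> pi / 3"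
  shows "card S \<le> kissing_number TYPE('a)"
proof -
  define A where "A = {card S | S :: 'a set. finite S \<and> S \<subseteq> sphere 0 1 \<and>
       (\<forall>u\<in>S. \<forall>v\<in>S. u \<noteq> v \<longrightarrow> arccos (inner u v) \<ge> pi / 3)}"
  have "A \<subseteq> {..card (Pi\<^sub>E (Basis::'a set) (\<lambda>_. {- 2 * int DIM('a) .. 2 * int DIM('a)}))}"
  proof
    fix k assume "k \<in> A"
    then obtain T :: "'a set" where T: "k = card T" "finite T" "T \<subseteq> sphere 0 1"
      "\<forall>u\<in>T. \<forall>v\<in>T. u \<noteq> v \<longrightarrow> arccos (inner u v) \<ge> pi / 3" unfolding A_def by blast
    show "k \<in> {..card (Pi\<^sub>E (Basis::'a set) (\<lambda>_. {- 2 * int DIM('a) .. 2 * int DIM('a)}))}"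
      using kiss_card_bound[OF T(2,3,4)] T(1) by simp
  qed
  then have "finite A" using finite_subset by blast
  moreover have "card S \<in> A" unfolding A_def using assms by blast
  ultimately have "card S \<le> Max A" by simp
  then show ?thesis unfolding kissing_number_def A_def .
qed

lemma sep_card_le_K:
  fixes v :: "'a::euclidean_space"
  assumes fin: "finite C" and vC: "v \<notin> C" and sep: "sepv dist v C"
  shows "card C \<le> kissing_number TYPE('a)"
proof -
  define \<phi> where "\<phi> x = (1 / norm (x - v)) *\<^sub>R (x - v)" for x
  have nz: "x - v \<noteq> 0" if "x \<in> C" for x using vC that by auto
  have unit: "norm (\<phi> x) = 1" if "x \<in> C" for x unfolding \<phi>_def using nz[OF that] by simp
  have half: "inner (\<phi> x) (\<phi> y) \<le> 1/2" if x: "x \<in> C" and y: "y \<in> C" and xy: "x \<noteq> y" for x y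
  proof -
    have s1: "dist v x \<le> dist x y" "dist v y \<le> dist x y" using sep x y xy unfolding sepv_def by auto
    have "norm (x - v) \<le> norm ((x - v) - (y - v))" using s1(1) by (simp add: dist_norm norm_minus_commute)
    moreover have "norm (y - v) \<le> norm ((x - v) - (y - v))" using s1(2) by (simp add: dist_norm norm_minus_commute)
    ultimately show ?thesis unfolding \<phi>_def by (rule inner_half[OF nz[OF x] nz[OF y]])
  qed
  have inj: "inj_on \<phi> C"
  proof (rule inj_onI, rule ccontr)
    fix x y assume x: "x \<in> C" and y: "y \<in> C" and e: "\<phi> x = \<phi> y" and ne: "x \<noteq> y"
    have "inner (\<phi> x) (\<phi> x) = 1" using unit[OF x] by (simp add: power2_norm_eq_inner[symmetric])
    then show False using half[OF x y ne] e by simp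
  qed
  have "card (\<phi> ` C) \<le> kissing_number TYPE('a)"
  proof (rule kiss_ge)
    show "finite (\<phi> ` C)" using fin by simp
    show "\<phi> ` C \<subseteq> sphere 0 1" using unit by auto
    show "\<forall>u\<in>\<phi> ` C. \<forall>w\<in>\<phi> ` C. u \<noteq> w \<longrightarrow> pi / 3 \<le> arccos (inner u w)"
    proof (intro ballI impI)
      fix u w assume u: "u \<in> \<phi> ` C" and w: "w \<in> \<phi> ` C" and uw: "u \<noteq> w"
      obtain x y where xy: "x \<in> C" "y \<in> C" "u = \<phi> x" "w = \<phi> y" using u w by blast
      then have "x \<noteq> y" using uw by blast
      then show "pi / 3 \<le> arccos (inner u w)"
        using half_imp_arccos[OF unit[OF xy(1)] unit[OF xy(2)] half[OF xy(1,2)]] xy by simp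
    qed
  qed
  then show ?thesis using card_image[OF inj] by simp
qed

lemma min_lin:
  fixes x :: real and d K :: nat
  assumes "x \<le> real d" "x \<le> real K"
  shows "x \<le> (1 - 1 / (2 * real K)) * real d + 1/2"
proof (cases "K = 0")
  case True then show ?thesis using assms by simp
next
  case False
  then have Kp: "real K > 0" by simp
  show ?thesis
  proof (cases "d \<le> K")
    case True
    have "real d / (2 * real K) \<le> 1/2" using True Kp by (simp add: divide_le_eq)
    then have "real d \<le> (1 - 1 / (2 * real K)) * real d + 1/2" by (simp add: algebra_simps)
    then show ?thesis using assms by linarith
  next
    case False
    have c: "0 \<le> 1 - 1 / (2 * real K)" using Kp by (simp add: divide_le_eq)
    have "(1 - 1 / (2 * real K)) * real K \<le> (1 - 1 / (2 * real K)) * real d"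
      using False by (intro mult_left_mono[OF _ c]) simp
    moreover have "(1 - 1 / (2 * real K)) * real K + 1/2 = real K" using Kp by (simp add: algebra_simps)
    ultimately show ?thesis using assms by linarith
  qed
qed

lemma metric_dist: "metric_on P dist"
  unfolding metric_on_def by (auto simp: dist_commute dist_triangle)

lemma part1:
  fixes P :: "'a::euclidean_space set"
  assumes fin: "finite P" and ne: "nash_equilibrium P dist s" and opt: "social_optimum P dist sopt"
  shows "social_cost P dist s \<le> ereal (2 - 1 / real (kissing_number TYPE('a))) * social_cost P dist sopt"
proof -
  let ?K = "kissing_number TYPE('a)"
  have m: "metric_on P dist" by (rule metric_dist)
  have gcs: "\<forall>x\<in>P. greedy_connected P dist s x" using ne_gc[OF fin m ne] by blast
  have gco: "\<forall>x\<in>P. greedy_connected P dist sopt x" using opt_gc[OF fin m opt] by blast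
  have vp: "valid_profile P sopt" using opt unfolding social_optimum_def by blast
  have vs: "valid_profile P s" using ne unfolding nash_equilibrium_def by blast
  have coef: "0 \<le> 2 - 1 / real ?K" by (cases "?K = 0") (auto simp: divide_le_eq)
  have real_ineq: "real (\<Sum>u\<in>P. card (s u)) \<le> (2 - 1 / real ?K) * real (\<Sum>u\<in>P. card (sopt u))"
  proof (cases "card P < 2")
    case True
    have "s u = {}" if u: "u \<in> P" for u
    proof -
      have "P \<subseteq> {u}"
      proof
        fix x assume x: "x \<in> P"
        show "x \<in> {u}"
        proof (rule ccontr)
          assume "x \<notin> {u}"
          then have "{u, x} \<subseteq> P" "card {u, x} = 2" using u x by auto
          then have "2 \<le> card P" using card_mono[OF fin] by metis
          then show False using True by simp
        qed
      qed
      then show ?thesis using vs u unfolding valid_profile_def valid_strategy_def by blast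
    qed
    then have "(\<Sum>u\<in>P. card (s u)) = 0" by simp
    moreover have "0 \<le> (2 - 1 / real ?K) * real (\<Sum>u\<in>P. card (sopt u))"
      by (intro mult_nonneg_nonneg coef of_nat_0_le_iff)
    ultimately show ?thesis by simp
  next
    case False
    then have c2: "2 \<le> card P" by simp
    obtain nn where nn: "is_nn P dist nn" using nn_exists[OF fin c2] by blast
    define c where "c u = card (Mnb P nn u \<inter> Nin P s u)" for u
    define dg where "dg u = card (Nb P sopt u)" for u
    have pv: "real (card (s u)) + real (c u) \<le> (1 - 1 / (2 * real ?K)) * real (dg u) + 1/2" if u: "u \<in> P" for u
    proof -
      have h1: "card (s u) + c u \<le> dg u" unfolding c_def dg_def by (rule opt_bound[OF fin m ne opt nn u])
      obtain C where C: "is_cover P dist u C" "Mnb P nn u \<subseteq> C" "sepv dist u C"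
        using K_cover[OF fin m nn u] by blast
      have finC: "finite C" using C(1) fin unfolding is_cover_def using finite_subset by blast
      have uC: "u \<notin> C" using C(1) unfolding is_cover_def by blast
      have "card (s u) + c u \<le> card C" unfolding c_def by (rule vertex_bound[OF fin m ne u C(1) C(2)])
      also have "card C \<le> ?K" by (rule sep_card_le_K[OF finC uC C(3)])
      finally have h2: "card (s u) + c u \<le> ?K" .
      have "real (card (s u)) + real (c u) \<le> real (dg u)" using h1 by linarith
      moreover have "real (card (s u)) + real (c u) \<le> real ?K" using h2 by linarith
      ultimately show ?thesis by (rule min_lin)
    qed
    have S1: "(\<Sum>u\<in>P. real (card (s u)) + real (c u)) \<le> (\<Sum>u\<in>P. (1 - 1 / (2 * real ?K)) * real (dg u) + 1/2)"
      by (rule sum_mono) (rule pv)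
    have S2: "(\<Sum>u\<in>P. real (card (s u)) + real (c u)) = real (\<Sum>u\<in>P. card (s u)) + real (\<Sum>u\<in>P. c u)"
      by (simp add: sum.distrib)
    have S3: "(\<Sum>u\<in>P. (1 - 1 / (2 * real ?K)) * real (dg u) + 1/2) = (1 - 1 / (2 * real ?K)) * real (\<Sum>u\<in>P. dg u) + real (card P) / 2"
      by (simp add: sum.distrib sum_distrib_left)
    have D: "real (\<Sum>u\<in>P. dg u) \<le> 2 * real (\<Sum>u\<in>P. card (sopt u))"
      using deg_sum[OF fin vp] unfolding dg_def by linarith
    have Cc: "real (card P) \<le> 2 * real (\<Sum>u\<in>P. c u)"
      using count_credit[OF fin m ne nn] unfolding c_def by linarith
    have c0: "0 \<le> 1 - 1 / (2 * real ?K)" by (cases "?K = 0") (auto simp: divide_le_eq)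
    have "(1 - 1 / (2 * real ?K)) * real (\<Sum>u\<in>P. dg u) \<le> (1 - 1 / (2 * real ?K)) * (2 * real (\<Sum>u\<in>P. card (sopt u)))"
      by (rule mult_left_mono[OF D c0])
    moreover have "(1 - 1 / (2 * real ?K)) * (2 * real (\<Sum>u\<in>P. card (sopt u))) = (2 - 1 / real ?K) * real (\<Sum>u\<in>P. card (sopt u))"
      by (simp add: algebra_simps)
    ultimately show ?thesis using S1 S2 S3 Cc by linarith
  qed
  show ?thesis unfolding cost_eq[OF gcs] cost_eq[OF gco] using real_ineq by simp
qed


theorem mainTheorem14:
  shows "(\<forall>(P :: 'a::euclidean_space set) s sopt.
            finite P \<and> nash_equilibrium P dist s \<and> social_optimum P dist sopt \<longrightarrow>
            social_cost P dist s \<le> ereal (2 - 1 / real (kissing_number TYPE('a))) * social_cost P dist sopt)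
       \<and> (\<forall>(P :: 'b set) (d :: 'b \<Rightarrow> 'b \<Rightarrow> real) s sopt.
            finite P \<and> card P \<ge> 2 \<and> metric_on P d \<and> nash_equilibrium P d s \<and> social_optimum P d sopt \<longrightarrow>
            social_cost P d s < 2 * social_cost P d sopt)"
  using part1 part2 by blast

end
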